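(* There exists a Heffter array $H(n;k)$ for all $n\equiv 1,3 \pmod 4$ and $k\equiv 2\pmod 4$ with $n>k\ge 6$.
   Context: A Heffter array $H(n;k)$ is an $n\times n$ array in which some cells are filled with nonzero integers and the others are empty, such that: each row and each column contains exactly $k$ filled cells; the entries of every row and of every column sum to $0$ modulo $2nk+1$; and for each integer $1\le x\le nk$, exactly one of $x$ or $-x$ appears in the array, and it appears exactly once. *)

theory Defs
  imports Main
begin

text \<open>An n x n partially filled array: cell (i,j) with i,j < n is either empty (None)
  or filled with an integer (Some v). Values outside the range i,j < n are irrelevant.\<close>
type_synonym parray = "nat \<Rightarrow> nat \<Rightarrow> int option"

definition filled_row :: "parray \<Rightarrow> nat \<Rightarrow> nat \<Rightarrow> nat set" where
  "filled_row A n i = {j. j < n \<and> A i j \<noteq> None}"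

definition filled_col :: "parray \<Rightarrow> nat \<Rightarrow> nat \<Rightarrow> nat set" where
  "filled_col A n j = {i. i < n \<and> A i j \<noteq> None}"

definition entry :: "parray \<Rightarrow> nat \<Rightarrow> nat \<Rightarrow> int" where
  "entry A i j = (case A i j of None \<Rightarrow> 0 | Some v \<Rightarrow> v)"

definition is_heffter :: "nat \<Rightarrow> nat \<Rightarrow> parray \<Rightarrow> bool" where
  "is_heffter n k A \<longleftrightarrow>
     (\<forall>i<n. card (filled_row A n i) = k) \<and>
     (\<forall>j<n. card (filled_col A n j) = k) \<and>
     (\<forall>i<n. (\<Sum>j\<in>filled_row A n i. entry A i j) mod int (2*n*k+1) = 0) \<and>
     (\<forall>j<n. (\<Sum>i\<in>filled_col A n j. entry A i j) mod int (2*n*k+1) = 0) \<and>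
     (\<forall>i<n. \<forall>j<n. \<forall>v. A i j = Some v \<longrightarrow> v \<noteq> 0 \<and> \<bar>v\<bar> \<le> int (n*k)) \<and>
     (\<forall>x::int. 1 \<le> x \<and> x \<le> int (n*k) \<longrightarrow>
        (\<exists>!(i,j). i < n \<and> j < n \<and> (A i j = Some x \<or> A i j = Some (-x))))"

end

theory Submission
  imports Defs
begin

definition DD :: "nat \<Rightarrow> nat set" where "DD k = {0,1,2,3,4,6} \<union> {7..k}"
definition blk :: "nat \<Rightarrow> nat \<Rightarrow> nat" where
 "blk k d = (if d = 0 then k-6 else if d=1 then k-5 else if d=2 then k-4 else if d=3 then k-3
   else if d=4 then k-2 else if d = 6 then k-1 else d-7)"
definition sg :: "nat \<Rightarrow> int" where
 "sg d = (if d = 0 \<or> d = 2 then -1 else if d < 7 then 1 else if (d-7) mod 4 = 0 \<or> (d-7) mod 4 = 3 then 1 else -1)"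
definition oo :: "nat \<Rightarrow> nat" where
 "oo d = (if d = 1 \<or> d = 6 then 0 else if d = 0 \<or> d = 3 then 1 else if d < 7 then 2 else if (d-7) mod 4 < 2 then 2 else 0)"
definition rho :: "nat \<Rightarrow> nat \<Rightarrow> nat \<Rightarrow> nat" where
 "rho n d i = (if d = 6 then n - 1 - (i + n - oo d) mod n else (i + n - oo d) mod n)"
definition val :: "nat \<Rightarrow> nat \<Rightarrow> nat \<Rightarrow> nat \<Rightarrow> int" where
 "val n k i d = sg d * int (blk k d * n + 1 + rho n d i)"
definition AA :: "nat \<Rightarrow> nat \<Rightarrow> parray" where
 "AA n k = (\<lambda>i j. if i < n \<and> j < n \<and> (j + n - i) mod n \<in> DD k then Some (val n k i ((j + n - i) mod n)) else None)"

lemma modsub: fixes a c n :: nat shows "c \<le> n \<Longrightarrow> int ((a + n - c) mod n) = (int a - int c) mod int n"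
proof -
  assume "c \<le> n"
  hence e: "int (a + n - c) = (int a - int c) + int n" by simp
  have "int ((a + n - c) mod n) = int (a + n - c) mod int n" by (simp only: of_nat_mod)
  also have "\<dots> = ((int a - int c) + int n) mod int n" by (simp only: e)
  also have "\<dots> = (int a - int c) mod int n" by (rule mod_add_self2)
  finally show ?thesis .
qed

lemma shift2: fixes a c n j :: nat shows "a + c \<le> n \<Longrightarrow> ((j + n - a) mod n + n - c) mod n = (j + n - (a+c)) mod n"
proof -
  assume h: "a + c \<le> n"
  have "int (((j + n - a) mod n + n - c) mod n) = (int ((j + n - a) mod n) - int c) mod int n"
    using h by (intro modsub) simp
  also have "\<dots> = ((int j - int a) mod int n - int c) mod int n" using h by (simp add: modsub)
  also have "\<dots> = (int j - int (a+c)) mod int n" by (simp add: mod_diff_left_eq algebra_simps)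
  also have "\<dots> = int ((j + n - (a+c)) mod n)" using h by (simp add: modsub)
  finally show ?thesis by simp
qed

lemma inv1: fixes i d n :: nat shows "i < n \<Longrightarrow> d < n \<Longrightarrow> ((i + d) mod n + n - i) mod n = d"
proof -
  assume h: "i < n" "d < n"
  have "int (((i + d) mod n + n - i) mod n) = (int ((i+d) mod n) - int i) mod int n"
    using h by (intro modsub) simp
  also have "\<dots> = (int i + int d - int i) mod int n"
    by (simp add: of_nat_mod mod_diff_left_eq)
  also have "\<dots> = int d" using h by simp
  finally show ?thesis by simp
qed

lemma inv2: fixes i j n :: nat shows "i < n \<Longrightarrow> j < n \<Longrightarrow> (i + (j + n - i) mod n) mod n = j"
proof -
  assume h: "i < n" "j < n"
  have "int ((i + (j + n - i) mod n) mod n) = (int i + int ((j + n - i) mod n)) mod int n"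
    by (simp add: of_nat_mod)
  also have "\<dots> = (int i + (int j - int i) mod int n) mod int n" using h by (simp add: modsub)
  also have "\<dots> = int j" using h by (simp add: mod_add_right_eq)
  finally show ?thesis by simp
qed

lemma inv3: fixes j d n :: nat shows "j < n \<Longrightarrow> d < n \<Longrightarrow> (j + n - (j + n - d) mod n) mod n = d"
proof -
  assume h: "j < n" "d < n"
  have "int ((j + n - (j + n - d) mod n) mod n) = (int j - int ((j + n - d) mod n)) mod int n"
    using h by (intro modsub) simp
  also have "\<dots> = (int j - (int j - int d) mod int n) mod int n" using h by (simp add: modsub)
  also have "\<dots> = int d" using h by (simp add: mod_diff_right_eq)
  finally show ?thesis by simp
qed

lemma oo_le: "oo d \<le> 2" by (simp add: oo_def)

lemma rho_lt: "0 < n \<Longrightarrow> rho n d i < n"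
  by (simp add: rho_def)

lemma rho_inj: assumes "2 < n" "i < n" "i' < n" "rho n d i = rho n d i'" shows "i = i'"
proof -
  have o: "oo d \<le> n" using oo_le[of d] assms(1) by linarith
  have "(i + n - oo d) mod n = (i' + n - oo d) mod n"
  proof (cases "d = 6")
    case True
    have a: "(i + n - oo d) mod n < n" "(i' + n - oo d) mod n < n" using assms by auto
    have "n - 1 - (i + n - oo d) mod n = n - 1 - (i' + n - oo d) mod n"
      using assms(4) True unfolding rho_def by simp
    then show ?thesis using a by linarith
  next
    case False
    then show ?thesis using assms(4) unfolding rho_def by simp
  qed
  hence e: "(int i - int (oo d)) mod int n = (int i' - int (oo d)) mod int n"
    using modsub[OF o, of i] modsub[OF o, of i'] by simp
  have "int i mod int n = ((int i - int (oo d)) + int (oo d)) mod int n" by simp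
  also have "\<dots> = ((int i - int (oo d)) mod int n + int (oo d)) mod int n" by (simp only: mod_add_left_eq)
  also have "\<dots> = ((int i' - int (oo d)) mod int n + int (oo d)) mod int n" by (simp only: e)
  also have "\<dots> = ((int i' - int (oo d)) + int (oo d)) mod int n" by (simp only: mod_add_left_eq)
  also have "\<dots> = int i' mod int n" by simp
  finally have "int i mod int n = int i' mod int n" .
  thus ?thesis using assms by simp
qed

lemma DD_le: "d \<in> DD k \<Longrightarrow> 6 \<le> k \<Longrightarrow> d \<le> k" by (auto simp: DD_def)

lemma blk_lt: "d \<in> DD k \<Longrightarrow> 6 \<le> k \<Longrightarrow> blk k d < k" by (auto simp: DD_def blk_def)

lemma blk_small: "d \<in> {0,1,2,3,4,6} \<Longrightarrow> 6 \<le> k \<Longrightarrow> blk k d = k - 6 + (if d = 6 then 5 else d)"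
  by (auto simp: blk_def)

lemma blk_big: "7 \<le> d \<Longrightarrow> blk k d = d - 7"
  by (auto simp: blk_def)

lemma blk_inj: assumes k: "6 \<le> k" shows "inj_on (blk k) (DD k)"
proof (rule inj_onI)
  fix x y assume x: "x \<in> DD k" and y: "y \<in> DD k" and e: "blk k x = blk k y"
  have xs: "x \<in> {0,1,2,3,4,6} \<or> (7 \<le> x \<and> x \<le> k)" using x by (auto simp: DD_def)
  have ys: "y \<in> {0,1,2,3,4,6} \<or> (7 \<le> y \<and> y \<le> k)" using y by (auto simp: DD_def)
  show "x = y"
  proof (cases "x \<in> {0,1,2,3,4,6}")
    case xa: True
    show ?thesis
    proof (cases "y \<in> {0,1,2,3,4,6}")
      case True
      have "(if x = 6 then 5 else x) = (if y = 6 then (5::nat) else y)"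
        using e blk_small[OF xa k] blk_small[OF True k] by simp
      then show ?thesis using xa True by auto
    next
      case False
      hence "7 \<le> y" "y \<le> k" using ys by auto
      then show ?thesis using e blk_small[OF xa k] blk_big[of y k] by simp
    qed
  next
    case xb: False
    hence x7: "7 \<le> x" "x \<le> k" using xs by auto
    show ?thesis
    proof (cases "y \<in> {0,1,2,3,4,6}")
      case True
      then show ?thesis using e blk_small[OF True k] blk_big[of x k] x7 by simp
    next
      case False
      hence "7 \<le> y" "y \<le> k" using ys by auto
      then show ?thesis using e blk_big[of y k] blk_big[of x k] x7 by simp
    qed
  qed
qed

lemma card_DD: "6 \<le> k \<Longrightarrow> card (DD k) = k"
proof -
  assume h: "6 \<le> k"
  have "DD k = {0,1,2,3,4,6} \<union> {7..k}" by (simp add: DD_def)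
  moreover have "card ({0,1,2,3,4,6} \<union> {7..k}) = 6 + (k - 6)"
    by (subst card_Un_disjoint) auto
  ultimately show ?thesis using h by simp
qed

lemma sg_pm: "sg d = 1 \<or> sg d = -1" by (simp add: sg_def)

lemma blk4: "blk k (7+4*g) = 4*g" "blk k (8+4*g) = 4*g+1" "blk k (9+4*g) = 4*g+2" "blk k (10+4*g) = 4*g+3"
  by (simp_all add: blk_def)
lemma sg4: "sg (7+4*g) = 1" "sg (8+4*g) = -1" "sg (9+4*g) = -1" "sg (10+4*g) = 1"
  by (simp_all add: sg_def, presburger+)
lemma oo4: "oo (7+4*g) = 2" "oo (8+4*g) = 2" "oo (9+4*g) = 0" "oo (10+4*g) = 0"
  by (simp_all add: oo_def, presburger+)
lemma rho4: "rho n (7+4*g) i = (i + n - 2) mod n" "rho n (8+4*g) i = (i + n - 2) mod n"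
  "rho n (9+4*g) i = (i + n) mod n" "rho n (10+4*g) i = (i + n) mod n"
  by (simp_all add: rho_def oo4)

lemma row_block: "val n k i (7+4*g) + val n k i (8+4*g) + val n k i (9+4*g) + val n k i (10+4*g) = 0"
  unfolding val_def blk4 sg4 rho4 by (simp add: algebra_simps)

lemma col_block: assumes "10 + 4*g \<le> n"
  shows "val n k ((j+n-(7+4*g)) mod n) (7+4*g) + val n k ((j+n-(8+4*g)) mod n) (8+4*g)
     + val n k ((j+n-(9+4*g)) mod n) (9+4*g) + val n k ((j+n-(10+4*g)) mod n) (10+4*g) = 0"
proof -
  have a: "((j+n-(7+4*g)) mod n + n - 2) mod n = (j + n - (9+4*g)) mod n"
    using shift2[of "7+4*g" 2 n j] assms by simp
  have b: "((j+n-(8+4*g)) mod n + n - 2) mod n = (j + n - (10+4*g)) mod n"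
    using shift2[of "8+4*g" 2 n j] assms by simp
  have c: "((j+n-(9+4*g)) mod n + n) mod n = (j + n - (9+4*g)) mod n" by simp
  have d: "((j+n-(10+4*g)) mod n + n) mod n = (j + n - (10+4*g)) mod n" by simp
  show ?thesis unfolding val_def blk4 sg4 rho4 a b c d by (simp add: algebra_simps)
qed

lemma sum_blocks: fixes f :: "nat \<Rightarrow> int"
  assumes "\<And>g. g < L \<Longrightarrow> f (7+4*g) + f (8+4*g) + f(9+4*g) + f(10+4*g) = 0"
  shows "sum f {7..<7+4*L} = 0"
  using assms
proof (induction L)
  case 0
  then show ?case by simp
next
  case (Suc L)
  have e: "{7..<7+4*Suc L} = {7..<7+4*L} \<union> {7+4*L, 8+4*L, 9+4*L, 10+4*L}" by auto
  have "sum f {7..<7+4*Suc L} = sum f {7..<7+4*L} + sum f {7+4*L, 8+4*L, 9+4*L, 10+4*L}"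
    unfolding e by (rule sum.union_disjoint) auto
  also have "sum f {7..<7+4*L} = 0" using Suc by auto
  also have "sum f {7+4*L, 8+4*L, 9+4*L, 10+4*L} = f (7+4*L) + f (8+4*L) + f(9+4*L) + f(10+4*L)"
    by (simp add: algebra_simps)
  also have "\<dots> = 0" using Suc.prems[of L] by simp
  finally show ?case by simp
qed

lemma small_vals:
  assumes k: "6 \<le> k" and n: "7 \<le> n"
  shows "val n k i 0 = - int ((k-6)*n + 1 + (i+n-1) mod n)"
    "val n k i 1 = int ((k-5)*n + 1 + (i+n) mod n)"
    "val n k i 2 = - int ((k-4)*n + 1 + (i+n-2) mod n)"
    "val n k i 3 = int ((k-3)*n + 1 + (i+n-1) mod n)"
    "val n k i 4 = int ((k-2)*n + 1 + (i+n-2) mod n)"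
    "val n k i 6 = int ((k-1)*n + 1 + (n - 1 - (i+n) mod n))"
  by (simp_all add: val_def sg_def blk_def rho_def oo_def)

lemma six_sum: fixes a b c :: nat
  assumes k: "6 \<le> k" and c: "c < n"
  shows "- int ((k-6)*n + 1 + a) + int ((k-5)*n + 1 + a) - int ((k-4)*n + 1 + b)
     + int ((k-3)*n + 1 + b) + int ((k-2)*n + 1 + c) + int ((k-1)*n + 1 + (n - 1 - c))
     = int (2*n*k+1)"
proof -
  have "int (n - 1 - c) = int n - 1 - int c" using c by simp
  moreover have "int ((k-6)*n) = (int k - 6) * int n" "int ((k-5)*n) = (int k - 5) * int n"
    "int ((k-4)*n) = (int k - 4) * int n" "int ((k-3)*n) = (int k - 3) * int n"
    "int ((k-2)*n) = (int k - 2) * int n" "int ((k-1)*n) = (int k - 1) * int n"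
    using k by (simp_all add: of_nat_diff)
  ultimately show ?thesis by (simp add: algebra_simps)
qed

lemma row_six: assumes k: "6 \<le> k" and n: "7 \<le> n" and i: "i < n"
  shows "val n k i 0 + val n k i 1 + val n k i 2 + val n k i 3 + val n k i 4 + val n k i 6 = int (2*n*k+1)"
  using six_sum[OF k, of "(i+n) mod n" n "(i+n-1) mod n" "(i+n-2) mod n"] n
  unfolding small_vals[OF k n] by simp

lemma col_six: assumes k: "6 \<le> k" and n: "7 \<le> n"
  shows "val n k ((j+n-0) mod n) 0 + val n k ((j+n-1) mod n) 1 + val n k ((j+n-2) mod n) 2
     + val n k ((j+n-3) mod n) 3 + val n k ((j+n-4) mod n) 4 + val n k ((j+n-6) mod n) 6 = int (2*n*k+1)"
proof -
  have e: "((j+n-0) mod n + n - 1) mod n = (j+n-1) mod n"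
     "((j+n-1) mod n + n) mod n = (j+n-1) mod n"
     "((j+n-2) mod n + n - 2) mod n = (j+n-4) mod n"
     "((j+n-3) mod n + n - 1) mod n = (j+n-4) mod n"
     "((j+n-4) mod n + n - 2) mod n = (j+n-6) mod n"
     "((j+n-6) mod n + n) mod n = (j+n-6) mod n"
    using shift2[of 0 1 n j] shift2[of 2 2 n j] shift2[of 3 1 n j] shift2[of 4 2 n j] n by simp_all
  show ?thesis
    using six_sum[OF k, of "(j+n-6) mod n" n "(j+n-1) mod n" "(j+n-4) mod n"] n
    unfolding small_vals[OF k n] e by simp
qed

lemma DD_split: "k = 6 + 4*L \<Longrightarrow> DD k = {0,1,2,3,4,6} \<union> {7..<7+4*L}"
  by (auto simp: DD_def)

lemma sum_DD: fixes f :: "nat \<Rightarrow> int"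
  assumes "k = 6 + 4*L"
  shows "sum f (DD k) = f 0 + f 1 + f 2 + f 3 + f 4 + f 6 + sum f {7..<7+4*L}"
proof -
  have "sum f (DD k) = sum f {0,1,2,3,4,6} + sum f {7..<7+4*L}"
    unfolding DD_split[OF assms] by (rule sum.union_disjoint) auto
  thus ?thesis by (simp add: algebra_simps)
qed

lemma row_sum: assumes k: "k = 6 + 4*L" and n: "k < n" and i: "i < n"
  shows "(\<Sum>d\<in>DD k. val n k i d) = int (2*n*k+1)"
proof -
  have "sum (val n k i) {7..<7+4*L} = 0" by (rule sum_blocks) (rule row_block)
  thus ?thesis using sum_DD[OF k, of "val n k i"] row_six[of k n i] k n i by simp
qed

lemma col_sum: assumes k: "k = 6 + 4*L" and n: "k < n" and j: "j < n"
  shows "(\<Sum>d\<in>DD k. val n k ((j+n-d) mod n) d) = int (2*n*k+1)"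
proof -
  have "(\<Sum>d\<in>{7..<7+4*L}. val n k ((j+n-d) mod n) d) = 0"
    by (rule sum_blocks) (rule col_block, use k n in linarith)
  thus ?thesis using sum_DD[OF k, of "\<lambda>d. val n k ((j+n-d) mod n) d"] col_six[of k n j] k n j by simp
qed

lemma abs_val: "\<bar>val n k i d\<bar> = int (blk k d * n + 1 + rho n d i)"
proof -
  have "\<bar>sg d\<bar> = 1" using sg_pm[of d] by auto
  thus ?thesis unfolding val_def abs_mult by simp
qed

lemma AA_some: "AA n k i j = Some v \<longleftrightarrow> i < n \<and> j < n \<and> (j + n - i) mod n \<in> DD k \<and> v = val n k i ((j + n - i) mod n)"
  by (auto simp: AA_def)

lemma AA_none: "AA n k i j \<noteq> None \<longleftrightarrow> i < n \<and> j < n \<and> (j + n - i) mod n \<in> DD k"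
  by (auto simp: AA_def)

lemma entry_AA: "i < n \<Longrightarrow> j < n \<Longrightarrow> (j + n - i) mod n \<in> DD k \<Longrightarrow> entry (AA n k) i j = val n k i ((j + n - i) mod n)"
  by (simp add: entry_def AA_def)

lemma fr_bij: assumes k: "6 \<le> k" "k < n" and i: "i < n"
  shows "bij_betw (\<lambda>d. (i+d) mod n) (DD k) (filled_row (AA n k) n i)"
proof (rule bij_betw_byWitness[where f' = "\<lambda>j. (j+n-i) mod n"])
  show "\<forall>d\<in>DD k. ((i + d) mod n + n - i) mod n = d"
  proof
    fix d assume "d \<in> DD k"
    hence "d < n" using DD_le[of d k] k by linarith
    thus "((i + d) mod n + n - i) mod n = d" by (rule inv1[OF i])
  qed
  show "\<forall>j\<in>filled_row (AA n k) n i. (i + (j + n - i) mod n) mod n = j"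
    using inv2 i by (auto simp: filled_row_def)
  show "(\<lambda>d. (i + d) mod n) ` DD k \<subseteq> filled_row (AA n k) n i"
  proof
    fix j assume "j \<in> (\<lambda>d. (i + d) mod n) ` DD k"
    then obtain d where d: "d \<in> DD k" "j = (i+d) mod n" by auto
    have "d < n" using DD_le[OF d(1)] k by linarith
    hence "(j + n - i) mod n = d" using inv1 i d(2) by simp
    moreover have "j < n" using d(2) i by simp
    ultimately show "j \<in> filled_row (AA n k) n i" using d(1) i AA_none[of n k i j] by (simp add: filled_row_def)
  qed
  show "(\<lambda>j. (j + n - i) mod n) ` filled_row (AA n k) n i \<subseteq> DD k"
  proof
    fix x assume "x \<in> (\<lambda>j. (j + n - i) mod n) ` filled_row (AA n k) n i"
    then obtain j where "j \<in> filled_row (AA n k) n i" "x = (j + n - i) mod n" by blast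
    thus "x \<in> DD k" using AA_none[of n k i j] by (simp add: filled_row_def)
  qed
qed

lemma fc_bij: assumes k: "6 \<le> k" "k < n" and j: "j < n"
  shows "bij_betw (\<lambda>d. (j+n-d) mod n) (DD k) (filled_col (AA n k) n j)"
proof (rule bij_betw_byWitness[where f' = "\<lambda>i. (j+n-i) mod n"])
  show "\<forall>d\<in>DD k. (j + n - (j + n - d) mod n) mod n = d"
  proof
    fix d assume "d \<in> DD k"
    hence "d < n" using DD_le[of d k] k by linarith
    thus "(j + n - (j + n - d) mod n) mod n = d" by (rule inv3[OF j])
  qed
  show "\<forall>i\<in>filled_col (AA n k) n j. (j + n - (j + n - i) mod n) mod n = i"
    using inv3 j by (auto simp: filled_col_def)
  show "(\<lambda>d. (j + n - d) mod n) ` DD k \<subseteq> filled_col (AA n k) n j"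
  proof
    fix i assume "i \<in> (\<lambda>d. (j + n - d) mod n) ` DD k"
    then obtain d where d: "d \<in> DD k" "i = (j+n-d) mod n" by auto
    have "d < n" using DD_le[OF d(1)] k by linarith
    hence "(j + n - i) mod n = d" using inv3 j d(2) by simp
    moreover have "i < n" using d(2) j by simp
    ultimately show "i \<in> filled_col (AA n k) n j" using d(1) j AA_none[of n k i j] by (simp add: filled_col_def)
  qed
  show "(\<lambda>i. (j + n - i) mod n) ` filled_col (AA n k) n j \<subseteq> DD k"
  proof
    fix x assume "x \<in> (\<lambda>i. (j + n - i) mod n) ` filled_col (AA n k) n j"
    then obtain i where "i \<in> filled_col (AA n k) n j" "x = (j + n - i) mod n" by blast
    thus "x \<in> DD k" using AA_none[of n k i j] by (simp add: filled_col_def)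
  qed
qed

lemma row_count: "6 \<le> k \<Longrightarrow> k < n \<Longrightarrow> i < n \<Longrightarrow> card (filled_row (AA n k) n i) = k"
  by (metis bij_betw_same_card[OF fr_bij] card_DD)

lemma col_count: "6 \<le> k \<Longrightarrow> k < n \<Longrightarrow> j < n \<Longrightarrow> card (filled_col (AA n k) n j) = k"
  by (metis bij_betw_same_card[OF fc_bij] card_DD)

lemma row_sum_AA: assumes k: "k = 6 + 4*L" and n: "k < n" and i: "i < n"
  shows "(\<Sum>j\<in>filled_row (AA n k) n i. entry (AA n k) i j) = int (2*n*k+1)"
proof -
  have k6: "6 \<le> k" using k by simp
  have "(\<Sum>j\<in>filled_row (AA n k) n i. entry (AA n k) i j)
      = (\<Sum>j\<in>filled_row (AA n k) n i. val n k i ((j + n - i) mod n))"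
  proof (rule sum.cong)
    fix j assume "j \<in> filled_row (AA n k) n i"
    hence "j < n \<and> AA n k i j \<noteq> None" by (simp add: filled_row_def)
    hence "j < n" "(j + n - i) mod n \<in> DD k" using AA_none[of n k i j] by blast+
    thus "entry (AA n k) i j = val n k i ((j + n - i) mod n)" using entry_AA i by blast
  qed simp
  also have "\<dots> = (\<Sum>d\<in>DD k. val n k i (((i+d) mod n + n - i) mod n))"
    by (rule sum.reindex_bij_betw[OF fr_bij[OF k6 n i], symmetric])
  also have "\<dots> = (\<Sum>d\<in>DD k. val n k i d)"
  proof (rule sum.cong)
    fix d assume "d \<in> DD k"
    hence "d < n" using DD_le[of d k] k6 n by linarith
    thus "val n k i (((i+d) mod n + n - i) mod n) = val n k i d" using inv1[OF i] by simp
  qed simp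
  also have "\<dots> = int (2*n*k+1)" by (rule row_sum[OF k n i])
  finally show ?thesis .
qed

lemma col_sum_AA: assumes k: "k = 6 + 4*L" and n: "k < n" and j: "j < n"
  shows "(\<Sum>i\<in>filled_col (AA n k) n j. entry (AA n k) i j) = int (2*n*k+1)"
proof -
  have k6: "6 \<le> k" using k by simp
  have "(\<Sum>i\<in>filled_col (AA n k) n j. entry (AA n k) i j)
      = (\<Sum>i\<in>filled_col (AA n k) n j. val n k i ((j + n - i) mod n))"
  proof (rule sum.cong)
    fix i assume "i \<in> filled_col (AA n k) n j"
    hence "i < n \<and> AA n k i j \<noteq> None" by (simp add: filled_col_def)
    hence "i < n" "(j + n - i) mod n \<in> DD k" using AA_none[of n k i j] by blast+
    thus "entry (AA n k) i j = val n k i ((j + n - i) mod n)" using entry_AA j by blast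
  qed simp
  also have "\<dots> = (\<Sum>d\<in>DD k. val n k ((j+n-d) mod n) ((j + n - (j+n-d) mod n) mod n))"
    by (rule sum.reindex_bij_betw[OF fc_bij[OF k6 n j], symmetric])
  also have "\<dots> = (\<Sum>d\<in>DD k. val n k ((j+n-d) mod n) d)"
  proof (rule sum.cong)
    fix d assume "d \<in> DD k"
    hence "d < n" using DD_le[of d k] k6 n by linarith
    thus "val n k ((j+n-d) mod n) ((j + n - (j+n-d) mod n) mod n) = val n k ((j+n-d) mod n) d"
      using inv3[OF j] by simp
  qed simp
  also have "\<dots> = int (2*n*k+1)" by (rule col_sum[OF k n j])
  finally show ?thesis .
qed

lemma vals_AA: assumes "6 \<le> k" "k < n" "AA n k i j = Some v"
  shows "v \<noteq> 0 \<and> \<bar>v\<bar> \<le> int (n*k)"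
proof -
  let ?d = "(j + n - i) mod n"
  have h: "?d \<in> DD k" "v = val n k i ?d" using assms(3) AA_some[of n k i j v] by blast+
  have "blk k ?d < k" using blk_lt[OF h(1) assms(1)] .
  hence "blk k ?d + 1 \<le> k" by simp
  hence "(blk k ?d + 1) * n \<le> k * n" by (rule mult_right_mono) simp
  moreover have "rho n ?d i < n" using rho_lt assms by simp
  moreover have "(blk k ?d + 1) * n = blk k ?d * n + n" by simp
  ultimately have "blk k ?d * n + 1 + rho n ?d i \<le> k * n" by linarith
  hence le: "blk k ?d * n + 1 + rho n ?d i \<le> n * k" by (simp add: mult.commute)
  have av: "\<bar>v\<bar> = int (blk k ?d * n + 1 + rho n ?d i)" using abs_val[of n k i ?d] h(2) by (simp only:)
  have "\<bar>v\<bar> \<le> int (n*k)" unfolding av using le by (simp only: of_nat_le_iff)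
  moreover have "\<bar>v\<bar> \<noteq> 0" unfolding av of_nat_eq_0_iff by simp
  ultimately show ?thesis by auto
qed

definition FF :: "nat \<Rightarrow> nat \<Rightarrow> nat \<times> nat \<Rightarrow> nat" where
  "FF n k p = (case p of (i,j) \<Rightarrow> blk k ((j+n-i) mod n) * n + 1 + rho n ((j+n-i) mod n) i)"

definition SS :: "nat \<Rightarrow> nat \<Rightarrow> (nat \<times> nat) set" where
  "SS n k = {(i,j). i < n \<and> j < n \<and> AA n k i j \<noteq> None}"

lemma SS_card: assumes "6 \<le> k" "k < n" shows "card (SS n k) = n * k"
proof -
  have "SS n k = Sigma {..<n} (\<lambda>i. filled_row (AA n k) n i)"
    by (auto simp: SS_def filled_row_def)
  moreover have "card (Sigma {..<n} (\<lambda>i. filled_row (AA n k) n i)) = (\<Sum>i<n. card (filled_row (AA n k) n i))"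
    by (rule card_SigmaI) (auto simp: filled_row_def)
  moreover have "(\<Sum>i<n. card (filled_row (AA n k) n i)) = (\<Sum>i<n. k)"
    using row_count[OF assms] by simp
  ultimately show ?thesis by simp
qed

lemma divmod_eq: fixes a a' r r' n :: nat
  assumes "a*n + r = a'*n + r'" "r < n" "r' < n" shows "a = a' \<and> r = r'"
proof -
  have "a = (a*n + r) div n" using assms(2) by simp
  also have "\<dots> = (a'*n + r') div n" using assms(1) by simp
  also have "\<dots> = a'" using assms(3) by simp
  finally have "a = a'" .
  thus ?thesis using assms(1) by simp
qed

lemma FF_inj: assumes k: "6 \<le> k" "k < n" shows "inj_on (FF n k) (SS n k)"
proof (rule inj_onI)
  fix p q assume p: "p \<in> SS n k" and q: "q \<in> SS n k" and e: "FF n k p = FF n k q"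
  obtain i j where pij: "p = (i,j)" by (cases p)
  obtain i' j' where qij: "q = (i',j')" by (cases q)
  let ?d = "(j+n-i) mod n" let ?d' = "(j'+n-i') mod n"
  have h: "i < n" "j < n" "?d \<in> DD k" using p AA_none[of n k i j] unfolding pij SS_def by auto
  have h': "i' < n" "j' < n" "?d' \<in> DD k" using q AA_none[of n k i' j'] unfolding qij SS_def by auto
  have n0: "0 < n" using k by simp
  have "blk k ?d * n + rho n ?d i = blk k ?d' * n + rho n ?d' i'"
    using e unfolding pij qij FF_def by simp
  moreover have "rho n ?d i < n" "rho n ?d' i' < n" using rho_lt[OF n0] by auto
  ultimately have 1: "blk k ?d = blk k ?d'" and 2: "rho n ?d i = rho n ?d' i'"
    using divmod_eq by blast+
  have dd: "?d = ?d'" using blk_inj[OF k(1)] 1 h(3) h'(3) by (meson inj_onD)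
  hence "rho n ?d i = rho n ?d i'" using 2 by simp
  hence ii: "i = i'" using rho_inj[of n i i' ?d] h h' k by simp
  have "j = (i + ?d) mod n" using inv2[OF h(1) h(2)] by simp
  also have "\<dots> = (i' + ?d') mod n" using ii dd by simp
  also have "\<dots> = j'" using inv2[OF h'(1) h'(2)] by simp
  finally show "p = q" using pij qij ii by simp
qed

lemma FF_image: assumes k: "6 \<le> k" "k < n" shows "FF n k ` SS n k = {1..n*k}"
proof (rule card_subset_eq)
  show "finite {1..n*k}" by simp
  show "FF n k ` SS n k \<subseteq> {1..n*k}"
  proof
    fix x assume "x \<in> FF n k ` SS n k"
    then obtain i j where p: "(i,j) \<in> SS n k" "x = FF n k (i,j)" by auto
    hence "AA n k i j = Some (val n k i ((j+n-i) mod n))" by (auto simp: SS_def AA_def split: if_splits)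
    hence "\<bar>val n k i ((j+n-i) mod n)\<bar> \<le> int (n*k)" using vals_AA[OF k] by blast
    moreover have "int x = \<bar>val n k i ((j+n-i) mod n)\<bar>" using p(2) abs_val[of n k i "(j+n-i) mod n"] by (simp add: FF_def)
    ultimately have "x \<le> n*k" by (simp only: of_nat_le_iff)
    moreover have "1 \<le> x" using p(2) by (simp add: FF_def)
    ultimately show "x \<in> {1..n*k}" by simp
  qed
  show "card (FF n k ` SS n k) = card {1..n*k}"
    using card_image[OF FF_inj[OF k]] SS_card[OF k] by simp
qed

lemma cell_iff: assumes "1 \<le> x"
  shows "(AA n k i j = Some x \<or> AA n k i j = Some (-x)) \<longleftrightarrow> (i,j) \<in> SS n k \<and> int (FF n k (i,j)) = x"
proof
  assume a: "AA n k i j = Some x \<or> AA n k i j = Some (-x)"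
  then obtain v where v: "AA n k i j = Some v" "\<bar>v\<bar> = x" using assms by auto
  hence "i < n \<and> j < n \<and> (j + n - i) mod n \<in> DD k \<and> v = val n k i ((j + n - i) mod n)"
    using AA_some by blast
  thus "(i,j) \<in> SS n k \<and> int (FF n k (i,j)) = x"
    using v abs_val[of n k i "(j+n-i) mod n"] by (simp add: SS_def FF_def)
next
  assume a: "(i,j) \<in> SS n k \<and> int (FF n k (i,j)) = x"
  hence "AA n k i j = Some (val n k i ((j+n-i) mod n))" by (auto simp: SS_def AA_def split: if_splits)
  moreover have "\<bar>val n k i ((j+n-i) mod n)\<bar> = x"
    using a abs_val[of n k i "(j+n-i) mod n"] by (simp add: FF_def)
  ultimately show "AA n k i j = Some x \<or> AA n k i j = Some (-x)" by (auto simp: abs_if split: if_splits)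
qed

lemma unique_cell: assumes k: "6 \<le> k" "k < n" and x: "1 \<le> x" "x \<le> int (n*k)"
  shows "\<exists>!(i,j). i < n \<and> j < n \<and> (AA n k i j = Some x \<or> AA n k i j = Some (-x))"
proof -
  have "nat x \<le> n*k" using x(2) by (simp only: nat_le_iff)
  hence "nat x \<in> {1..n*k}" using x by auto
  then obtain p where p: "p \<in> SS n k" "FF n k p = nat x" using FF_image[OF k] by (metis imageE)
  obtain i j where pij: "p = (i,j)" by (cases p)
  have P: "\<And>i j. (i < n \<and> j < n \<and> (AA n k i j = Some x \<or> AA n k i j = Some (-x)))
      \<longleftrightarrow> (i,j) \<in> SS n k \<and> int (FF n k (i,j)) = x"
    using cell_iff[OF x(1)] by (auto simp: SS_def)
  show ?thesis
  proof (rule ex1I[of _ p])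
    show "case p of (i, j) \<Rightarrow> i < n \<and> j < n \<and> (AA n k i j = Some x \<or> AA n k i j = Some (- x))"
      using P p x unfolding pij by simp
    fix q assume "case q of (i, j) \<Rightarrow> i < n \<and> j < n \<and> (AA n k i j = Some x \<or> AA n k i j = Some (- x))"
    then obtain i' j' where q: "q = (i',j')" "(i',j') \<in> SS n k" "int (FF n k (i',j')) = x"
      using P by (cases q) auto
    have "FF n k q = FF n k p" using q p x by simp
    thus "q = p" using inj_onD[OF FF_inj[OF k]] q(1,2) p(1) by metis
  qed
qed

theorem theorem3p2:
  fixes n k :: nat
  assumes "n mod 4 = 1 \<or> n mod 4 = 3"
    and "k mod 4 = 2"
    and "n > k" and "k \<ge> 6"
  shows "\<exists>A. is_heffter n k A"
proof -
  define L where "L = (k - 6) div 4"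
  have kL: "k = 6 + 4*L" unfolding L_def using assms(2,4) by presburger
  have k6: "6 \<le> k" and kn: "k < n" using assms by auto
  have "is_heffter n k (AA n k)"
    unfolding is_heffter_def
  proof (intro conjI allI impI)
    show "\<And>i. i < n \<Longrightarrow> card (filled_row (AA n k) n i) = k" using row_count[OF k6 kn] .
    show "\<And>j. j < n \<Longrightarrow> card (filled_col (AA n k) n j) = k" using col_count[OF k6 kn] .
    show "\<And>i. i < n \<Longrightarrow> (\<Sum>j\<in>filled_row (AA n k) n i. entry (AA n k) i j) mod int (2 * n * k + 1) = 0"
      using row_sum_AA[OF kL kn] by simp
    show "\<And>j. j < n \<Longrightarrow> (\<Sum>i\<in>filled_col (AA n k) n j. entry (AA n k) i j) mod int (2 * n * k + 1) = 0"
      using col_sum_AA[OF kL kn] by simp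
    show "\<And>i j v. i < n \<Longrightarrow> j < n \<Longrightarrow> AA n k i j = Some v \<Longrightarrow> v \<noteq> 0" using vals_AA[OF k6 kn] by blast
    show "\<And>i j v. i < n \<Longrightarrow> j < n \<Longrightarrow> AA n k i j = Some v \<Longrightarrow> \<bar>v\<bar> \<le> int (n * k)" using vals_AA[OF k6 kn] by blast
    show "\<And>x. 1 \<le> x \<and> x \<le> int (n * k) \<Longrightarrow>
      \<exists>!(i, j). i < n \<and> j < n \<and> (AA n k i j = Some x \<or> AA n k i j = Some (- x))"
      using unique_cell[OF k6 kn] by blast
  qed
  thus ?thesis by blast
qed

end
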